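(* Consider the integer quadratic program: minimize $x^TQx$ subject to $Ax\le b$, $Cx=d$, $x\in\mathbb{Z}^n$. For any deep optimal solution $x^\star$ of this program and any $y_i\in Y$ such that $y_i^TQ$ is linearly dependent on the rows of $C$ (i.e., lies in their linear span), the vectors $x^\star+y_i$ and $x^\star-y_i$ are also optimal solutions.
   Context: Setting: $Q$ is an $n\times n$ integer symmetric matrix, $A$ an $m\times n$ integer matrix, $b\in\mathbb{Z}^m$, $C$ an integer matrix with $n$ columns and linearly independent rows, and $d$ an integer vector. $\Delta$ is the maximum absolute value of the determinant of a square submatrix of $C$. $y_1,\dots,y_r$ is a basis of the nullspace of $C$ consisting of integer vectors with $|y_i|_\infty\le\Delta^2$, and $Y$ is the set of these vectors. A feasible solution is an $x\in\mathbb{Z}^n$ with $Ax\le b$ and $Cx=d$; an optimal solution is a feasible solution minimizing $x^TQx$ over all feasible solutions. A feasible solution $x$ is deep if $x+y_i$ and $x-y_i$ are feasible for all $y_i\in Y$. *)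

theory Defs
  imports "Jordan_Normal_Form.DL_Submatrix" "Jordan_Normal_Form.Determinant"
begin

(* Integer matrices/vectors are JNF 'int mat' / 'int vec'; linear algebra notions
   (independence, span, nullspace) are taken over the rationals. *)

definition ratm :: "int mat \<Rightarrow> rat mat" where
  "ratm M = map_mat rat_of_int M"

definition ratv :: "int vec \<Rightarrow> rat vec" where
  "ratv v = map_vec rat_of_int v"

definition rows_lin_indep :: "int mat \<Rightarrow> bool" where
  "rows_lin_indep C \<longleftrightarrow>
     (\<forall>l \<in> carrier_vec (dim_row C).
        transpose_mat (ratm C) *\<^sub>v l = 0\<^sub>v (dim_col C) \<longrightarrow> l = 0\<^sub>v (dim_row C))"

definition Delta :: "int mat \<Rightarrow> int" where
  "Delta C = Max {\<bar>det (submatrix C I J)\<bar> | I J.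
                   I \<subseteq> {..<dim_row C} \<and> J \<subseteq> {..<dim_col C} \<and> card I = card J}"

definition nullspace_basis :: "int mat \<Rightarrow> int vec list \<Rightarrow> bool" where
  "nullspace_basis C ys \<longleftrightarrow>
     (\<forall>y \<in> set ys. y \<in> carrier_vec (dim_col C) \<and> C *\<^sub>v y = 0\<^sub>v (dim_row C)) \<and>
     (\<forall>c \<in> carrier_vec (length ys).
        mat_of_cols (dim_col C) (map ratv ys) *\<^sub>v c = 0\<^sub>v (dim_col C) \<longrightarrow> c = 0\<^sub>v (length ys)) \<and>
     (\<forall>z \<in> carrier_vec (dim_col C). ratm C *\<^sub>v z = 0\<^sub>v (dim_row C) \<longrightarrow>
        (\<exists>c \<in> carrier_vec (length ys). mat_of_cols (dim_col C) (map ratv ys) *\<^sub>v c = z))"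

definition feasible :: "int mat \<Rightarrow> int vec \<Rightarrow> int mat \<Rightarrow> int vec \<Rightarrow> int vec \<Rightarrow> bool" where
  "feasible A b C d x \<longleftrightarrow> x \<in> carrier_vec (dim_col C) \<and>
     (\<forall>i < dim_row A. (A *\<^sub>v x) $ i \<le> b $ i) \<and> C *\<^sub>v x = d"

definition objective :: "int mat \<Rightarrow> int vec \<Rightarrow> int" where
  "objective Q x = x \<bullet> (Q *\<^sub>v x)"

definition optimal :: "int mat \<Rightarrow> int mat \<Rightarrow> int vec \<Rightarrow> int mat \<Rightarrow> int vec \<Rightarrow> int vec \<Rightarrow> bool" where
  "optimal Q A b C d x \<longleftrightarrow> feasible A b C d x \<and>
     (\<forall>z. feasible A b C d z \<longrightarrow> objective Q x \<le> objective Q z)"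

definition deep :: "int vec list \<Rightarrow> int mat \<Rightarrow> int vec \<Rightarrow> int mat \<Rightarrow> int vec \<Rightarrow> int vec \<Rightarrow> bool" where
  "deep ys A b C d x \<longleftrightarrow> feasible A b C d x \<and>
     (\<forall>y \<in> set ys. feasible A b C d (x + y) \<and> feasible A b C d (x - y))"

end

theory Submission imports Defs begin

lemma ratv_scalar: "dim_vec v = dim_vec w \<Longrightarrow> rat_of_int (v \<bullet> w) = ratv v \<bullet> ratv w"
  unfolding ratv_def scalar_prod_def by (simp add: of_int_sum)

lemma obj_expand:
  fixes Q :: "int mat"
  assumes Q: "Q \<in> carrier_mat n n" "transpose_mat Q = Q"
    and x: "x \<in> carrier_vec n" and y: "y \<in> carrier_vec n"
  shows "objective Q (x + y) = objective Q x + 2 * (y \<bullet> (Q *\<^sub>v x)) + objective Q y"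
    and "objective Q (x - y) = objective Q x - 2 * (y \<bullet> (Q *\<^sub>v x)) + objective Q y"
proof -
  have sym: "x \<bullet> (Q *\<^sub>v y) = y \<bullet> (Q *\<^sub>v x)"
  proof -
    have "x \<bullet> (Q *\<^sub>v y) = (transpose_mat Q *\<^sub>v x) \<bullet> y"
      using transpose_vec_mult_scalar[OF Q(1) y x] by simp
    also have "\<dots> = y \<bullet> (Q *\<^sub>v x)" using Q x y by (simp add: comm_scalar_prod[of _ n])
    finally show ?thesis .
  qed
  have Qx: "Q *\<^sub>v x \<in> carrier_vec n" and Qy: "Q *\<^sub>v y \<in> carrier_vec n" using Q x y by auto
  have "objective Q (x + y) = (x + y) \<bullet> (Q *\<^sub>v x + Q *\<^sub>v y)"
    unfolding objective_def using Q x y by (simp add: mult_add_distrib_mat_vec)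
  also have "\<dots> = x \<bullet> (Q *\<^sub>v x) + x \<bullet> (Q *\<^sub>v y) + (y \<bullet> (Q *\<^sub>v x) + y \<bullet> (Q *\<^sub>v y))"
    using x y Qx Qy by (simp add: add_scalar_prod_distrib[of _ n] scalar_prod_add_distrib[of _ n])
  finally show "objective Q (x + y) = objective Q x + 2 * (y \<bullet> (Q *\<^sub>v x)) + objective Q y"
    unfolding objective_def sym by simp
  have "objective Q (x - y) = (x - y) \<bullet> (Q *\<^sub>v x - Q *\<^sub>v y)"
    unfolding objective_def using Q x y by (simp add: mult_minus_distrib_mat_vec)
  also have "\<dots> = x \<bullet> (Q *\<^sub>v x) - x \<bullet> (Q *\<^sub>v y) - (y \<bullet> (Q *\<^sub>v x) - y \<bullet> (Q *\<^sub>v y))"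
    using x y Qx Qy by (simp add: minus_scalar_prod_distrib[of _ n] scalar_prod_minus_distrib[of _ n])
  finally show "objective Q (x - y) = objective Q x - 2 * (y \<bullet> (Q *\<^sub>v x)) + objective Q y"
    unfolding objective_def sym by simp
qed


theorem lemma4:
  fixes n m k :: nat and Q A C :: "int mat" and b d :: "int vec" and ys :: "int vec list"
    and xs y :: "int vec"
  assumes Q: "Q \<in> carrier_mat n n" "transpose_mat Q = Q"
    and A: "A \<in> carrier_mat m n" and b: "b \<in> carrier_vec m"
    and C: "C \<in> carrier_mat k n" "rows_lin_indep C" and d: "d \<in> carrier_vec k"
    and Y: "nullspace_basis C ys"
    and Ybound: "\<forall>v \<in> set ys. \<forall>j < n. \<bar>v $ j\<bar> \<le> (Delta C)^2"
    and deep: "deep ys A b C d xs" and opt: "optimal Q A b C d xs"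
    and yY: "y \<in> set ys"
    and dep: "\<exists>l \<in> carrier_vec k. transpose_mat (ratm Q) *\<^sub>v ratv y = transpose_mat (ratm C) *\<^sub>v l"
  shows "optimal Q A b C d (xs + y) \<and> optimal Q A b C d (xs - y)"
proof -
  have y: "y \<in> carrier_vec n" and Cy: "C *\<^sub>v y = 0\<^sub>v k"
    using Y yY C unfolding nullspace_basis_def by auto
  have x: "xs \<in> carrier_vec n" using opt C unfolding optimal_def feasible_def by auto
  have fp: "feasible A b C d (xs + y)" and fm: "feasible A b C d (xs - y)"
    using deep yY unfolding deep_def by auto
  obtain l where l: "l \<in> carrier_vec k"
    and lq: "transpose_mat (ratm Q) *\<^sub>v ratv y = transpose_mat (ratm C) *\<^sub>v l" using dep by blast
  have Qr: "ratm Q \<in> carrier_mat n n" and Cr: "ratm C \<in> carrier_mat k n" and yr: "ratv y \<in> carrier_vec n"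
    using Q C y unfolding ratm_def ratv_def by auto
  have Cyr: "ratm C *\<^sub>v ratv y = 0\<^sub>v k"
  proof -
    have "ratm C *\<^sub>v ratv y = ratv (C *\<^sub>v y)"
      unfolding ratv_def ratm_def by (rule of_int_hom.mult_mat_vec_hom[symmetric, OF C(1) y])
    then show ?thesis using Cy unfolding ratv_def by auto
  qed
  have "rat_of_int (objective Q y) = ratv y \<bullet> (ratm Q *\<^sub>v ratv y)"
  proof -
    have "rat_of_int (objective Q y) = ratv y \<bullet> ratv (Q *\<^sub>v y)"
      unfolding objective_def using Q y by (intro ratv_scalar) auto
    also have "ratv (Q *\<^sub>v y) = ratm Q *\<^sub>v ratv y"
      unfolding ratv_def ratm_def by (rule of_int_hom.mult_mat_vec_hom[OF Q(1) y])
    finally show ?thesis .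
  qed
  also have "\<dots> = (transpose_mat (ratm Q) *\<^sub>v ratv y) \<bullet> ratv y"
    using transpose_vec_mult_scalar[OF Qr yr yr] by simp
  also have "\<dots> = (transpose_mat (ratm C) *\<^sub>v l) \<bullet> ratv y" using lq by simp
  also have "\<dots> = l \<bullet> (ratm C *\<^sub>v ratv y)" using transpose_vec_mult_scalar[OF Cr yr l] by simp
  also have "\<dots> = 0" using Cyr l by simp
  finally have yQy: "objective Q y = 0" by simp
  have ep: "objective Q (xs + y) = objective Q xs + 2 * (y \<bullet> (Q *\<^sub>v xs))"
    using obj_expand(1)[OF Q x y] yQy by simp
  have em: "objective Q (xs - y) = objective Q xs - 2 * (y \<bullet> (Q *\<^sub>v xs))"
    using obj_expand(2)[OF Q x y] yQy by simp
  have "objective Q xs \<le> objective Q (xs + y)" "objective Q xs \<le> objective Q (xs - y)"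
    using opt fp fm unfolding optimal_def by auto
  then have e0: "objective Q (xs + y) = objective Q xs" "objective Q (xs - y) = objective Q xs"
    using ep em by auto
  show ?thesis using opt fp fm e0 unfolding optimal_def by auto
qed

end
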